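(* Let $\mathbb{H}$ be a finite dimensional real Hilbert space, let $C\subseteq\mathbb{H}$ be a closed convex cone, let $K\subseteq C$ be a closed convex set with $0\in K$, and let $f:C\to\mathbb{H}$ be a weakly homogeneous map of degree $\gamma>0$ with leading term $f^\infty$. Let $F:\mathbb{H}\to\mathbb{H}$ be a given continuous extension of $f$ and let $F_K^{\mathrm{nat}}(x):=x-\Pi_K(x-F(x))$ be the natural map. Suppose: (a) $f^\infty$ is copositive on $K$; (b) for $x\in K$ with $\|x\|$ sufficiently large (i.e. as $\|x\|\to\infty$), there exists no $c>0$ such that $-x=c\,(f(x)-f^\infty(x))$; (c) $\lim_{x\in K,\|x\|\to\infty}\|F_K^{\mathrm{nat}}(x)\|=\infty$, and $\|f(x)-f^\infty(x)\|\le\|F_K^{\mathrm{nat}}(x)\|$ for all $x\in K$ with $\|x\|$ sufficiently large. Then the solution set $\mathrm{SOL}(f,K)$ of $\mathrm{WHVI}(f,K)$ is nonempty and compact.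
   Context: A continuous map $h:C\to\mathbb{H}$ is positively homogeneous of degree $\gamma\ge 0$ if $h(\lambda x)=\lambda^\gamma h(x)$ for all $x\in C$, $\lambda>0$. A map $f:C\to\mathbb{H}$ is weakly homogeneous of degree $\gamma$ if $f=h+g$ where $h$ is continuous and positively homogeneous of degree $\gamma$ on $C$ and $g$ is continuous on $C$ with $\lim_{x\in C,\|x\|\to\infty} g(x)/\|x\|^\gamma=0$; the leading term is $f^\infty:=h$. A map $\psi$ is copositive on a set $D$ if $\langle \psi(x)-\psi(0),x\rangle\ge 0$ for all $x\in D$. $\Pi_K$ denotes the orthogonal projection onto $K$. $\mathrm{WHVI}(f,K)$ is the problem of finding $x^*\in K$ with $\langle f(x^* ),y-x^*\rangle\ge 0$ for all $y\in K$; $\mathrm{SOL}(f,K)$ is its solution set. *)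

theory Defs
  imports "HOL-Analysis.Analysis"
begin

definition pos_homogeneous_on :: "'a::real_normed_vector set \<Rightarrow> real \<Rightarrow> ('a \<Rightarrow> 'b::real_normed_vector) \<Rightarrow> bool" where
  "pos_homogeneous_on C \<gamma> h \<longleftrightarrow> continuous_on C h \<and> \<gamma> \<ge> 0 \<and>
     (\<forall>x\<in>C. \<forall>t::real. t > 0 \<longrightarrow> h (t *\<^sub>R x) = (t powr \<gamma>) *\<^sub>R h x)"

definition weakly_homogeneous_on ::
  "'a::real_normed_vector set \<Rightarrow> real \<Rightarrow> ('a \<Rightarrow> 'b::real_normed_vector) \<Rightarrow> ('a \<Rightarrow> 'b) \<Rightarrow> bool" where
  "weakly_homogeneous_on C \<gamma> f h \<longleftrightarrow> pos_homogeneous_on C \<gamma> h \<and>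
     (\<exists>g. continuous_on C g \<and> (\<forall>x\<in>C. f x = h x + g x) \<and>
          (\<forall>\<epsilon>>0. \<exists>R. \<forall>x\<in>C. norm x \<ge> R \<longrightarrow> norm (g x /\<^sub>R (norm x powr \<gamma>)) \<le> \<epsilon>))"

definition copositive_on :: "'a::real_inner set \<Rightarrow> ('a \<Rightarrow> 'a) \<Rightarrow> bool" where
  "copositive_on D \<psi> \<longleftrightarrow> (\<forall>x\<in>D. inner (\<psi> x - \<psi> 0) x \<ge> 0)"

definition natural_map :: "'a::euclidean_space set \<Rightarrow> ('a \<Rightarrow> 'a) \<Rightarrow> 'a \<Rightarrow> 'a" where
  "natural_map K F x = x - closest_point K (x - F x)"

definition SOL :: "('a::real_inner \<Rightarrow> 'a) \<Rightarrow> 'a set \<Rightarrow> 'a set" where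
  "SOL f K = {x \<in> K. \<forall>y\<in>K. inner (f x) (y - x) \<ge> 0}"

end

theory Submission
  imports Defs
begin

lemma norm_sq_le_aux:
  fixes v d :: "'a::real_inner"
  assumes "inner v d \<ge> 0"
  shows "norm v \<le> norm (v + d)"
proof -
  have "inner (v + d) (v + d) = inner v v + 2 * inner v d + inner d d"
    by (simp add: inner_add inner_commute)
  also have "\<dots> \<ge> inner v v" using assms by simp
  finally show ?thesis by (simp add: norm_le)
qed

theorem theorem3p2:
  fixes C K :: "'a::euclidean_space set"
    and f finf F :: "'a \<Rightarrow> 'a"
    and \<gamma> :: real
  assumes C_cone: "cone C" and C_convex: "convex C" and C_closed: "closed C"
    and K_sub: "K \<subseteq> C" and K_closed: "closed K" and K_convex: "convex K" and K0: "0 \<in> K"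
    and gamma_pos: "\<gamma> > 0"
    and f_wh: "weakly_homogeneous_on C \<gamma> f finf"
    and F_cont: "continuous_on UNIV F" and F_ext: "\<forall>x\<in>C. F x = f x"
    and a: "copositive_on K finf"
    and b: "\<exists>R. \<forall>x\<in>K. norm x \<ge> R \<longrightarrow> \<not> (\<exists>c>0. - x = c *\<^sub>R (f x - finf x))"
    and c1: "\<forall>M. \<exists>R. \<forall>x\<in>K. norm x \<ge> R \<longrightarrow> norm (natural_map K F x) \<ge> M"
    and c2: "\<exists>R. \<forall>x\<in>K. norm x \<ge> R \<longrightarrow> norm (f x - finf x) \<le> norm (natural_map K F x)"
  shows "SOL f K \<noteq> {} \<and> compact (SOL f K)"
proof -
  have Kne: "K \<noteq> {}" using K0 by auto
  have FK: "\<And>x. x \<in> K \<Longrightarrow> F x = f x" using F_ext K_sub by auto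
  have f0: "finf 0 = 0"
  proof -
    have hom: "\<forall>x\<in>C. \<forall>t::real. t > 0 \<longrightarrow> finf (t *\<^sub>R x) = (t powr \<gamma>) *\<^sub>R finf x"
      using f_wh unfolding weakly_homogeneous_on_def pos_homogeneous_on_def by blast
    have "0 \<in> C" using K0 K_sub by auto
    then have "finf ((2::real) *\<^sub>R 0) = (2 powr \<gamma>) *\<^sub>R finf 0" using hom by auto
    then have "(2 powr \<gamma> - 1) *\<^sub>R finf 0 = 0" by (simp add: algebra_simps)
    moreover have "2 powr \<gamma> > (1::real)" using gamma_pos by (simp add: gr_one_powr)
    ultimately show ?thesis using gamma_pos by simp
  qed
  have cop: "\<And>x. x \<in> K \<Longrightarrow> inner (finf x) x \<ge> 0"
    using a f0 unfolding copositive_on_def by auto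
  obtain Rb where Rb: "\<forall>x\<in>K. norm x \<ge> Rb \<longrightarrow> \<not> (\<exists>c>0. - x = c *\<^sub>R (f x - finf x))"
    using b by blast
  obtain R2 where R2: "\<forall>x\<in>K. norm x \<ge> R2 \<longrightarrow> norm (f x - finf x) \<le> norm (natural_map K F x)"
    using c2 by blast
  obtain R1 where R1: "\<forall>x\<in>K. norm x \<ge> R1 \<longrightarrow> norm (natural_map K F x) \<ge> 1"
    using c1 by blast
  define R0 where "R0 = max (max Rb R2) (max R1 1)"
  have R0pos: "R0 > 0" unfolding R0_def by auto
  have bound: "norm x < R0" if t01: "0 \<le> t" "t \<le> 1"
      and fx: "closest_point K (t *\<^sub>R (x - F x)) = x" for t x
  proof (rule ccontr)
    assume "\<not> norm x < R0"
    then have big: "norm x \<ge> R0" by simp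
    have xK: "x \<in> K" using fx closest_point_in_set[OF K_closed Kne] by metis
    have bx: "\<not> (\<exists>c>0. - x = c *\<^sub>R (f x - finf x))" using Rb xK big unfolding R0_def by auto
    have c2x: "norm (f x - finf x) \<le> norm (natural_map K F x)"
      using R2 xK big unfolding R0_def by auto
    have c1x: "norm (natural_map K F x) \<ge> 1"
      using R1 xK big unfolding R0_def by auto
    consider "t = 0" | "t = 1" | "0 < t \<and> t < 1" using t01 by linarith
    then show False
    proof cases
      case 1
      then have "x = 0" using fx closest_point_self[OF K0] by simp
      then show False using big R0pos by simp
    next
      case 2
      then have "natural_map K F x = 0" using fx unfolding natural_map_def by simp
      then show False using c1x by simp
    next
      case 3
      then have t0: "0 < t" and t1: "t < 1" by auto
      define z where "z = x - f x"
      have Fx: "F x = f x" using FK xK .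
      have dot: "inner (t *\<^sub>R z - x) (y - x) \<le> 0" if "y \<in> K" for y
        using closest_point_dot[OF K_convex K_closed that, of "t *\<^sub>R z"] fx Fx
        unfolding z_def by simp
      define w where "w = z - ((1 - t) / t) *\<^sub>R x"
      have wx: "w - x = (1 / t) *\<^sub>R (t *\<^sub>R z - x)"
      proof -
        have e: "1 + (1 - t) / t = 1 / t" using t0 by (simp add: field_simps)
        have "w - x = z - (1 + (1 - t) / t) *\<^sub>R x"
          unfolding w_def by (simp add: algebra_simps)
        also have "\<dots> = (1 / t) *\<^sub>R (t *\<^sub>R z - x)"
          unfolding e using t0 by (simp add: algebra_simps)
        finally show ?thesis .
      qed
      have "x = closest_point K w"
      proof (rule closest_point_unique[OF K_convex K_closed xK], intro ballI)
        fix y assume yK: "y \<in> K"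
        have "inner (w - x) (x - y) = (1 / t) * (- inner (t *\<^sub>R z - x) (y - x))"
          unfolding wx by (simp add: inner_diff_right algebra_simps)
        also have "\<dots> \<ge> 0" using dot[OF yK] t0 by (simp add: divide_nonpos_pos)
        finally have "norm (w - x) \<le> norm ((w - x) + (x - y))"
          by (rule norm_sq_le_aux)
        then show "dist w x \<le> dist w y" by (simp add: dist_norm)
      qed
      then have "norm (natural_map K F x) = dist (closest_point K w) (closest_point K z)"
        unfolding natural_map_def z_def using Fx by (simp add: dist_norm)
      also have "\<dots> \<le> dist w z" by (rule closest_point_lipschitz[OF K_convex K_closed Kne])
      also have "\<dots> = ((1 - t) / t) * norm x" using t0 t1 unfolding w_def by (simp add: dist_norm)
      finally have Nle: "t * norm (natural_map K F x) \<le> (1 - t) * norm x"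
        using t0 by (simp add: field_simps)
      define g where "g = f x - finf x"
      have gle: "t * norm g \<le> (1 - t) * norm x"
        using c2x Nle t0 unfolding g_def
        by (meson dual_order.trans mult_left_mono less_imp_le)
      have d0: "inner (t *\<^sub>R z - x) x \<ge> 0" using dot[OF K0] by (simp add: inner_diff_right)
      then have "t * inner z x \<ge> inner x x" by (simp add: inner_diff_left)
      then have "t * inner x x - t * inner (f x) x \<ge> inner x x"
        unfolding z_def by (simp add: inner_diff_left algebra_simps)
      moreover have "inner (finf x) x \<ge> 0" using cop xK .
      ultimately have gx: "t * inner g x \<le> - (1 - t) * inner x x"
        unfolding g_def using t0
        by (simp add: inner_diff_left algebra_simps)
           (smt (verit, ccfv_SIG) mult_nonneg_nonneg)
      have "inner (t *\<^sub>R g + (1 - t) *\<^sub>R x) (t *\<^sub>R g + (1 - t) *\<^sub>R x)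
            = (t * norm g)^2 + 2 * (1 - t) * (t * inner g x) + ((1-t) * norm x)^2"
      proof -
        have "inner (t *\<^sub>R g + (1 - t) *\<^sub>R x) (t *\<^sub>R g + (1 - t) *\<^sub>R x)
           = t * t * inner g g + 2 * (1 - t) * (t * inner g x) + (1 - t) * (1 - t) * inner x x"
          by (simp add: inner_add_left inner_add_right inner_commute algebra_simps)
        then show ?thesis by (simp add: power2_eq_square power_mult_distrib dot_square_norm)
      qed
      also have "\<dots> \<le> ((1-t) * norm x)^2 + 2 * (1 - t) * (- (1 - t) * inner x x) + ((1-t) * norm x)^2"
      proof -
        have "(t * norm g)^2 \<le> ((1-t) * norm x)^2"
          using gle t0 by (simp add: power_mono)
        moreover have "2 * (1 - t) * (t * inner g x) \<le> 2 * (1 - t) * (- (1 - t) * inner x x)"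
          using gx t1 by (simp add: mult_left_mono)
        ultimately show ?thesis by linarith
      qed
      also have "\<dots> = 0" by (simp add: power2_eq_square dot_square_norm algebra_simps)
      finally have "t *\<^sub>R g + (1 - t) *\<^sub>R x = 0"
        by (metis inner_ge_zero inner_eq_zero_iff order_antisym)
      then have e1: "(1 - t) *\<^sub>R x = - (t *\<^sub>R g)"
        by (simp add: eq_neg_iff_add_eq_0 add.commute)
      have "x = (1 / (1 - t)) *\<^sub>R ((1 - t) *\<^sub>R x)" using t1 by simp
      also have "\<dots> = - ((t / (1 - t)) *\<^sub>R g)" unfolding e1 by simp
      finally have "- x = (t / (1 - t)) *\<^sub>R g" by simp
      moreover have "t / (1 - t) > 0" using t0 t1 by simp
      ultimately show False using bx unfolding g_def by blast
    qed
  qed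
  have SOL_eq: "SOL f K = {x. closest_point K (x - F x) = x}"
  proof (intro set_eqI iffI)
    fix x assume xs: "x \<in> SOL f K"
    then have xK: "x \<in> K" and vi: "\<forall>y\<in>K. inner (f x) (y - x) \<ge> 0" unfolding SOL_def by auto
    have "x = closest_point K (x - F x)"
    proof (rule closest_point_unique[OF K_convex K_closed xK], intro ballI)
      fix y assume yK: "y \<in> K"
      have "norm (F x) \<le> norm (F x + (y - x))"
        by (rule norm_sq_le_aux) (use vi yK FK[OF xK] in auto)
      then show "dist (x - F x) x \<le> dist (x - F x) y"
        by (simp add: dist_norm norm_minus_commute algebra_simps)
    qed
    then show "x \<in> {x. closest_point K (x - F x) = x}" by simp
  next
    fix x assume "x \<in> {x. closest_point K (x - F x) = x}"
    then have fx: "closest_point K (x - F x) = x" by simp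
    have xK: "x \<in> K" using fx closest_point_in_set[OF K_closed Kne] by metis
    have "inner (f x) (y - x) \<ge> 0" if "y \<in> K" for y
      using closest_point_dot[OF K_convex K_closed that, of "x - F x"] fx FK[OF xK] by simp
    then show "x \<in> SOL f K" using xK unfolding SOL_def by auto
  qed
  have contP: "continuous_on A (closest_point K)" for A
    by (rule continuous_on_closest_point[OF K_convex K_closed Kne])
  have cont1: "continuous_on UNIV (\<lambda>x. closest_point K (x - F x))"
    by (rule continuous_on_compose2[OF contP _ subset_UNIV])
       (intro continuous_intros F_cont)
  have closed: "closed (SOL f K)"
    unfolding SOL_eq by (rule closed_Collect_eq[OF cont1 continuous_on_id])
  have bdd: "bounded (SOL f K)"
  proof -
    have "SOL f K \<subseteq> cball 0 R0"
      unfolding SOL_eq using bound[of 1] by (auto simp: less_imp_le)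
    then show ?thesis using bounded_cball bounded_subset by blast
  qed
  have ne: "SOL f K \<noteq> {}"
  proof -
    define r where "r = R0 + 1"
    have rpos: "r > 0" using R0pos unfolding r_def by simp
    define B where "B = cball (0::'a) r"
    define \<tau> where "\<tau> x = max 0 (min 1 (r - norm x))" for x :: 'a
    define \<Phi> where "\<Phi> x = closest_point B (closest_point K (\<tau> x *\<^sub>R (x - F x)))" for x
    have Bc: "convex B" "closed B" "B \<noteq> {}" "compact B" unfolding B_def using rpos by auto
    have cont\<tau>: "continuous_on A \<tau>" for A unfolding \<tau>_def by (intro continuous_intros)
    have contB: "continuous_on A (closest_point B)" for A
      by (rule continuous_on_closest_point[OF Bc(1-3)])
    have "continuous_on B \<Phi>"
      unfolding \<Phi>_def
      apply (rule continuous_on_compose2[OF contB _ subset_UNIV])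
      apply (rule continuous_on_compose2[OF contP _ subset_UNIV])
      apply (intro continuous_intros cont\<tau> continuous_on_subset[OF F_cont])
      by auto
    moreover have "\<Phi> \<in> B \<rightarrow> B" unfolding \<Phi>_def using closest_point_in_set[OF Bc(2,3)] by auto
    ultimately obtain x where xB: "x \<in> B" and fx: "\<Phi> x = x"
      using brouwer[OF Bc(4,1,3)] by blast
    define y where "y = closest_point K (\<tau> x *\<^sub>R (x - F x))"
    have t01: "0 \<le> \<tau> x" "\<tau> x \<le> 1" unfolding \<tau>_def by auto
    show ?thesis
    proof (cases "y \<in> B")
      case True
      then have "x = y" using fx closest_point_self[OF True] unfolding \<Phi>_def y_def by simp
      then have fx2: "closest_point K (\<tau> x *\<^sub>R (x - F x)) = x" unfolding y_def by simp
      then have "norm x < R0" using bound t01 by blast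
      then have "\<tau> x = 1" unfolding \<tau>_def r_def by auto
      then have "x \<in> SOL f K" using fx2 unfolding SOL_eq by simp
      then show ?thesis by blast
    next
      case False
      have ah: "affine hull B = UNIV"
        by (rule affine_hull_nonempty_interior) (use rpos in \<open>simp add: B_def\<close>)
      have ri: "rel_interior B = ball 0 r"
        using rel_interior_interior[OF ah] by (simp add: B_def)
      have "y \<notin> rel_interior B" using False ri unfolding B_def by auto
      then have "closest_point B y \<notin> rel_interior B"
        using closest_point_in_rel_interior[OF Bc(2,3), of y] ah by auto
      then have "x \<notin> ball 0 r" using fx ri unfolding \<Phi>_def y_def by simp
      then have "norm x \<ge> r" by simp
      then have "\<tau> x = 0" unfolding \<tau>_def by auto
      then have "y = 0" unfolding y_def using closest_point_self[OF K0] by simp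
      then show ?thesis using False rpos unfolding B_def by simp
    qed
  qed
  show ?thesis using ne closed bdd compact_eq_bounded_closed by blast
qed

end
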